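(* Let $c_o>0$. Then the functional $-\mathcal{G}_R$ does not attain a minimum on the class of admissible surfaces that are topological discs; that is, there is no admissible disc-type surface $\Sigma_0$ with $-\mathcal{G}_R[\Sigma_0]\le-\mathcal{G}_R[\Sigma]$ for every admissible disc-type surface $\Sigma$.
   Context: Work in $\mathbf{R}^3$, coordinates $(x,y,z)$, $E_3=(0,0,1)$. An admissible surface is a connected, oriented, compact, smoothly embedded surface $\Sigma$ with boundary, interior in $\{z>0\}$, boundary in $\{z=0\}$, such that $\nu_3/z$ extends smoothly up to $z=0$. $\Omega$ is the region enclosed by $\Sigma$ and $\{z=0\}$, $\nu$ the unit normal pointing out of $\Omega$, $\nu_3=\nu\cdot E_3$. Principal curvatures: $d\nu(e_i)=-\kappa_ie_i$, $H=(\kappa_1+\kappa_2)/2$ (a round sphere of radius $R$ with outward normal has $H=-1/R$). With $\underline\Sigma=\Sigma\cap\{z\ge\underline z\}$ and $n$ the outward conormal of $\underline\Sigma$: $\mathcal{A}_R[\Sigma]=\lim_{\underline z\to0^+}\big(\int_{\underline\Sigma}z^{-2}d\Sigma+\underline z^{-1}\oint_{\partial\underline\Sigma}\partial_nz\,ds\big)$, $\mathcal{U}_R[\Sigma]=-\int_\Sigma\frac{\nu_3}{z}d\Sigma$, and $\mathcal{G}_R=\mathcal{A}_R-2c_o\mathcal{U}_R$. *)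

theory Defs
  imports "HOL-Analysis.Analysis"
begin

text \<open>Points of R^3 are of type real^3 with coordinates x = p$1, y = p$2, z = p$3.
  A disc-type surface is represented by a parametrisation of the closed unit disc
  (cball 0 1 in real^2); the surface is its image.\<close>

definition E3 :: "real^3" where "E3 = axis 3 1"

fun iter_dderiv :: "('a::real_normed_vector) list \<Rightarrow> ('a \<Rightarrow> 'b::real_normed_vector) \<Rightarrow> 'a \<Rightarrow> 'b" where
  "iter_dderiv [] f = f"
| "iter_dderiv (v # vs) f = (\<lambda>x. frechet_derivative (iter_dderiv vs f) (at x) v)"

definition smooth_on_open :: "('a::real_normed_vector \<Rightarrow> 'b::real_normed_vector) \<Rightarrow> 'a set \<Rightarrow> bool" where
  "smooth_on_open f U \<longleftrightarrow> open U \<and> (\<forall>vs. iter_dderiv vs f differentiable_on U)"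

definition smooth_upto :: "('a::real_normed_vector \<Rightarrow> 'b::real_normed_vector) \<Rightarrow> 'a set \<Rightarrow> bool" where
  "smooth_upto f S \<longleftrightarrow> (\<exists>g U. S \<subseteq> U \<and> smooth_on_open g U \<and> (\<forall>x\<in>S. g x = f x))"

definition Disc :: "(real^2) set" where "Disc = cball 0 1"

definition pd1 :: "(real^2 \<Rightarrow> real^3) \<Rightarrow> real^2 \<Rightarrow> real^3" where
  "pd1 \<phi> u = frechet_derivative \<phi> (at u) (axis 1 1)"
definition pd2 :: "(real^2 \<Rightarrow> real^3) \<Rightarrow> real^2 \<Rightarrow> real^3" where
  "pd2 \<phi> u = frechet_derivative \<phi> (at u) (axis 2 1)"
definition Nrm :: "(real^2 \<Rightarrow> real^3) \<Rightarrow> real^2 \<Rightarrow> real^3" where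
  "Nrm \<phi> u = cross3 (pd1 \<phi> u) (pd2 \<phi> u)"

definition smooth_embedded_disc :: "(real^2 \<Rightarrow> real^3) \<Rightarrow> bool" where
  "smooth_embedded_disc \<phi> \<longleftrightarrow> smooth_upto \<phi> Disc \<and> inj_on \<phi> Disc \<and>
     (\<forall>u\<in>Disc. \<phi> differentiable (at u) \<and> inj (frechet_derivative \<phi> (at u)))"

text \<open>The region Omega enclosed by the surface and the plane z = 0: the union of the bounded
  connected components of the open upper half space with the surface removed.\<close>
definition Omega :: "(real^2 \<Rightarrow> real^3) \<Rightarrow> (real^3) set" where
  "Omega \<phi> = (let S = {x::real^3. x$3 > 0} - \<phi> ` Disc in
      {x\<in>S. bounded (connected_component_set S x)})"

text \<open>Orientation sign making the unit normal point out of Omega.\<close>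
definition out_sign :: "(real^2 \<Rightarrow> real^3) \<Rightarrow> real" where
  "out_sign \<phi> = (if (\<forall>u\<in>ball 0 1. \<forall>\<^sub>F t in at_right 0.
        \<phi> u + t *\<^sub>R (Nrm \<phi> u /\<^sub>R norm (Nrm \<phi> u)) \<notin> Omega \<phi> \<and>
        \<phi> u - t *\<^sub>R (Nrm \<phi> u /\<^sub>R norm (Nrm \<phi> u)) \<in> Omega \<phi>) then 1 else -1)"

definition nu :: "(real^2 \<Rightarrow> real^3) \<Rightarrow> real^2 \<Rightarrow> real^3" where
  "nu \<phi> u = out_sign \<phi> *\<^sub>R (Nrm \<phi> u /\<^sub>R norm (Nrm \<phi> u))"
definition nu3 :: "(real^2 \<Rightarrow> real^3) \<Rightarrow> real^2 \<Rightarrow> real" where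
  "nu3 \<phi> u = nu \<phi> u \<bullet> E3"

definition admissible_disc :: "(real^2 \<Rightarrow> real^3) \<Rightarrow> bool" where
  "admissible_disc \<phi> \<longleftrightarrow> smooth_embedded_disc \<phi> \<and>
     (\<forall>u\<in>ball 0 1. (\<phi> u)$3 > 0) \<and> (\<forall>u\<in>sphere 0 1. (\<phi> u)$3 = 0) \<and>
     (\<exists>g. smooth_upto g Disc \<and> (\<forall>u\<in>ball 0 1. g u = nu3 \<phi> u / (\<phi> u)$3))"

definition surf_int :: "(real^2 \<Rightarrow> real^3) \<Rightarrow> (real^2) set \<Rightarrow> (real^2 \<Rightarrow> real) \<Rightarrow> real" where
  "surf_int \<phi> A f = integral A (\<lambda>u. f u * norm (Nrm \<phi> u))"

text \<open>Arclength line integral over a set C that is the image of a simple closed regular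
  C1 curve (independent of the parametrisation).\<close>
definition line_int :: "(real^3) set \<Rightarrow> (real^3 \<Rightarrow> real) \<Rightarrow> real" where
  "line_int C f = (THE I. \<exists>\<gamma>::real \<Rightarrow> real^3. simple_path \<gamma> \<and> pathfinish \<gamma> = pathstart \<gamma> \<and>
      \<gamma> C1_differentiable_on {0..1} \<and>
      (\<forall>t\<in>{0..1}. vector_derivative \<gamma> (at t within {0..1}) \<noteq> 0) \<and>
      path_image \<gamma> = C \<and>
      I = integral {0..1} (\<lambda>t. f (\<gamma> t) * norm (vector_derivative \<gamma> (at t within {0..1}))))"

text \<open>The outward conormal n of the superlevel part {z \<ge> zl} at its boundary curve {z = zl}
  is -grad_Sigma z / |grad_Sigma z| with grad_Sigma z = E3 - nu_3 nu, hence
  d_n z = n . E3 = - |E3 - nu_3 nu|.\<close>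
definition dn_z :: "(real^2 \<Rightarrow> real^3) \<Rightarrow> real^2 \<Rightarrow> real" where
  "dn_z \<phi> u = (let g = E3 - nu3 \<phi> u *\<^sub>R nu \<phi> u in - (g /\<^sub>R norm g) \<bullet> E3)"

definition A_R :: "(real^2 \<Rightarrow> real^3) \<Rightarrow> real" where
  "A_R \<phi> = Lim (at_right 0) (\<lambda>zl.
      surf_int \<phi> {u\<in>Disc. (\<phi> u)$3 \<ge> zl} (\<lambda>u. 1 / ((\<phi> u)$3)\<^sup>2)
    + (1 / zl) * line_int (\<phi> ` {u\<in>Disc. (\<phi> u)$3 = zl})
                  (\<lambda>p. dn_z \<phi> (THE u. u \<in> Disc \<and> \<phi> u = p)))"

definition U_R :: "(real^2 \<Rightarrow> real^3) \<Rightarrow> real" where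
  "U_R \<phi> = - surf_int \<phi> (ball 0 1) (\<lambda>u. nu3 \<phi> u / (\<phi> u)$3)"

definition G_R :: "real \<Rightarrow> (real^2 \<Rightarrow> real^3) \<Rightarrow> real" where
  "G_R c\<^sub>o \<phi> = A_R \<phi> - 2 * c\<^sub>o * U_R \<phi>"

end

theory Submission
  imports Defs "HOL-Complex_Analysis.Complex_Analysis"
begin

no_notation fps_nth (infixl \<open>$\<close> 75)




lemma circle_length_core:
  fixes \<beta> B :: "real \<Rightarrow> complex"
  assumes der: "\<And>t. t \<in> {0..1} \<Longrightarrow> (\<beta> has_vector_derivative B t) (at t)"
    and contB: "continuous_on {0..1} B"
    and nz: "\<And>t. t \<in> {0..1} \<Longrightarrow> B t \<noteq> 0"
    and n1: "\<And>t. t \<in> {0..1} \<Longrightarrow> norm (\<beta> t) = 1"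
    and sp: "simple_path \<beta>" and cl: "pathfinish \<beta> = pathstart \<beta>"
  shows "integral {0..1} (\<lambda>t. norm (B t)) = 2 * pi"
proof -
  have vp: "valid_path \<beta>"
    unfolding valid_path_def
    by (rule C1_differentiable_imp_piecewise) (use der contB in \<open>auto simp: C1_differentiable_on_def intro!: exI[of _ B]\<close>)
  have nimg: "0 \<notin> path_image \<beta>"
    using n1 by (auto simp: path_image_def) (metis norm_zero zero_neq_one)
  have b0: "\<beta> t \<noteq> 0" if "t \<in> {0..1}" for t using n1[OF that] by auto
  have contb: "continuous_on {0..1} \<beta>"
    using sp simple_path_imp_path path_def by blast
  have re0: "Re (B t * cnj (\<beta> t)) = 0" if t: "t \<in> {0..1}" for t
  proof -
    have dw: "(\<beta> has_vector_derivative B t) (at t within {0..1})"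
      using der[OF t] by (rule has_vector_derivative_at_within)
    have d0: "((\<lambda>t. \<beta> t * cnj (\<beta> t)) has_vector_derivative (\<beta> t * cnj (B t) + B t * cnj (\<beta> t))) (at t within {0..1})"
      by (rule has_vector_derivative_mult[OF dw has_vector_derivative_cnj[OF dw]])
    have d1: "((\<lambda>t. \<beta> t * cnj (\<beta> t)) has_vector_derivative (B t * cnj (\<beta> t) + \<beta> t * cnj (B t))) (at t within {0..1})"
      using d0 by (simp add: add.commute)
    have "((\<lambda>t. \<beta> t * cnj (\<beta> t)) has_vector_derivative 0) (at t within {0..1})"
    proof (rule has_vector_derivative_transform_within)
      show "((\<lambda>t. 1) has_vector_derivative 0) (at t within {0..1})" by (rule has_vector_derivative_const)
      show "0 < (1::real)" by simp
      show "t \<in> {0..1}" by fact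
      fix x assume x: "x \<in> {0..1}" "dist x t < 1"
      have "complex_of_real ((cmod (\<beta> x))\<^sup>2) = \<beta> x * cnj (\<beta> x)" by (rule complex_norm_square)
      then show "1 = \<beta> x * cnj (\<beta> x)" using n1[OF x(1)] by simp
    qed
    then have v0: "vector_derivative (\<lambda>t. \<beta> t * cnj (\<beta> t)) (at t within {0..1}) = 0"
      using t by (intro vector_derivative_within_closed_interval) auto
    have "vector_derivative (\<lambda>t. \<beta> t * cnj (\<beta> t)) (at t within {0..1}) = B t * cnj (\<beta> t) + \<beta> t * cnj (B t)"
      using t d1 by (intro vector_derivative_within_closed_interval) auto
    then have "B t * cnj (\<beta> t) + \<beta> t * cnj (B t) = 0" using v0 by simp
    moreover have "\<beta> t * cnj (B t) = cnj (B t * cnj (\<beta> t))" by simp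
    ultimately have "complex_of_real (2 * Re (B t * cnj (\<beta> t))) = 0"
      by (metis complex_add_cnj)
    then have "2 * Re (B t * cnj (\<beta> t)) = 0" by (simp only: of_real_eq_0_iff)
    then show ?thesis by linarith
  qed
  define \<omega> where "\<omega> t = Im (B t * cnj (\<beta> t))" for t
  have Bdiv: "B t / \<beta> t = \<i> * of_real (\<omega> t)" if t: "t \<in> {0..1}" for t
  proof -
    have e: "\<beta> t * cnj (\<beta> t) = 1"
      using n1[OF t] complex_norm_square[of "\<beta> t"] by simp
    have "B t / \<beta> t = B t * cnj (\<beta> t)"
      using inverse_unique[OF e] by (simp add: divide_inverse)
    also have "\<dots> = \<i> * of_real (\<omega> t)"
      using re0[OF t] by (simp add: \<omega>_def complex_eq_iff)
    finally show ?thesis .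
  qed
  have absw: "\<bar>\<omega> t\<bar> = norm (B t)" if t: "t \<in> {0..1}" for t
  proof -
    have "norm (B t) = norm (B t / \<beta> t)" using n1[OF t] by (simp add: norm_divide)
    also have "\<dots> = \<bar>\<omega> t\<bar>" using Bdiv[OF t] by (simp add: norm_mult)
    finally show ?thesis by simp
  qed
  have contw: "continuous_on {0..1} \<omega>"
    unfolding \<omega>_def by (intro continuous_intros contB contb)
  have wnz: "\<omega> t \<noteq> 0" if "t \<in> {0..1}" for t using absw[OF that] nz[OF that] by auto
  have sgn: "(\<forall>t\<in>{0..1}. \<omega> t > 0) \<or> (\<forall>t\<in>{0..1}. \<omega> t < 0)"
  proof (rule ccontr)
    assume "\<not> ?thesis"
    then obtain a b where a: "a \<in> {0..1}" "\<omega> a \<le> 0" and b: "b \<in> {0..1}" "\<omega> b \<ge> 0"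
      by (auto simp: not_less)
    have "\<exists>x. min a b \<le> x \<and> x \<le> max a b \<and> \<omega> x = 0"
    proof (cases "a \<le> b")
      case True
      then show ?thesis using IVT'[of \<omega> a 0 b] a b continuous_on_subset[OF contw, of "{a..b}"]
        by auto
    next
      case False
      then have "\<exists>x. b \<le> x \<and> x \<le> a \<and> - \<omega> x = 0"
        using IVT'[of "\<lambda>t. - \<omega> t" b 0 a] a b continuous_on_subset[OF continuous_on_minus[OF contw], of "{b..a}"]
        by auto
      then show ?thesis using False by auto
    qed
    then obtain x where "min a b \<le> x" "x \<le> max a b" "\<omega> x = 0" by blast
    moreover have "x \<in> {0..1}" using calculation a b by auto
    ultimately show False using wnz by blast
  qed
  have intw: "(\<omega> has_integral integral {0..1} \<omega>) {0..1}"
    using contw integrable_continuous_interval by blast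
  define I where "I = integral {0..1} \<omega>"
  have hc: "((\<lambda>w. 1/(w - 0)) has_contour_integral (\<i> * of_real I)) \<beta>"
    unfolding has_contour_integral_def
  proof -
    have "((\<lambda>t. \<i> * of_real (\<omega> t)) has_integral (\<i> * of_real I)) {0..1}"
      using has_integral_mult_right[OF has_integral_of_real[OF intw]] by (simp add: I_def)
    then show "((\<lambda>x. 1 / (\<beta> x - 0) * vector_derivative \<beta> (at x within {0..1})) has_integral \<i> * complex_of_real I) {0..1}"
    proof (rule has_integral_eq[rotated])
      fix x :: real assume x: "x \<in> {0..1}"
      have "vector_derivative \<beta> (at x within {0..1}) = B x"
        using x der[OF x] by (auto intro!: vector_derivative_at_within_ivl)
      then show "\<i> * complex_of_real (\<omega> x) = 1 / (\<beta> x - 0) * vector_derivative \<beta> (at x within {0..1})"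
        using Bdiv[OF x] by simp
    qed
  qed
  have wn: "winding_number \<beta> 0 = of_real (I / (2*pi))"
    using winding_number_valid_path[OF vp nimg] contour_integral_unique[OF hc]
    by (simp add: field_simps)
  have "winding_number \<beta> 0 \<in> {-1,0,1}"
    by (rule simple_closed_path_winding_number_cases[OF sp cl nimg])
  then have I3: "I / (2*pi) \<in> {-1,0,1}" using wn
    by (auto simp: complex_eq_iff)
  have Inz: "I \<noteq> 0"
  proof
    assume I0: "I = 0"
    from sgn show False
    proof
      assume pos: "\<forall>t\<in>{0..1}. \<omega> t > 0"
      have "\<omega> 0 = 0"
        using has_integral_0_cbox_imp_0[of 0 1 \<omega> 0] contw pos intw I0 unfolding I_def
        by (auto simp: less_imp_le)
      then show False using pos[rule_format, of 0] by simp
    next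
      assume neg: "\<forall>t\<in>{0..1}. \<omega> t < 0"
      have "(\<lambda>t. - \<omega> t) 0 = 0"
        using has_integral_0_cbox_imp_0[of 0 1 "\<lambda>t. - \<omega> t" 0] continuous_on_minus[OF contw] neg
          has_integral_neg[OF intw] I0 unfolding I_def
        by (auto simp: less_imp_le)
      then show False using neg[rule_format, of 0] by simp
    qed
  qed
  then have aI: "\<bar>I\<bar> = 2 * pi" using I3 by (auto simp: field_simps)
  have "integral {0..1} (\<lambda>t. norm (B t)) = integral {0..1} (\<lambda>t. \<bar>\<omega> t\<bar>)"
    by (rule integral_cong) (simp add: absw)
  also have "\<dots> = \<bar>I\<bar>"
  using sgn proof
    assume pos: "\<forall>t\<in>{0..1}. \<omega> t > 0"
    have p: "\<bar>\<omega> t\<bar> = \<omega> t" if "t \<in> {0..1}" for t using pos that by force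
    have "integral {0..1} (\<lambda>t. \<bar>\<omega> t\<bar>) = I" unfolding I_def
      by (intro integral_cong) (rule p)
    moreover have "I \<ge> 0" unfolding I_def
    proof (rule integral_nonneg)
      show "\<omega> integrable_on {0..1}" using contw by (rule integrable_continuous_interval)
      fix t :: real assume tt: "t \<in> {0..1}" show "0 \<le> \<omega> t" using pos tt less_imp_le by blast
    qed
    ultimately show ?thesis by simp
  next
    assume neg: "\<forall>t\<in>{0..1}. \<omega> t < 0"
    have p: "\<bar>\<omega> t\<bar> = - \<omega> t" if "t \<in> {0..1}" for t using neg that by force
    have "integral {0..1} (\<lambda>t. \<bar>\<omega> t\<bar>) = integral {0..1} (\<lambda>t. - \<omega> t)"
      by (intro integral_cong) (rule p)
    also have "\<dots> = - I" unfolding I_def by simp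
    finally have e: "integral {0..1} (\<lambda>t. \<bar>\<omega> t\<bar>) = - I" .
    have "integral {0..1} (\<lambda>t. \<bar>\<omega> t\<bar>) \<ge> 0"
    proof (rule integral_nonneg)
      show "(\<lambda>t. \<bar>\<omega> t\<bar>) integrable_on {0..1}"
        by (intro integrable_continuous_interval continuous_intros contw)
    qed simp
    then show ?thesis using e by simp
  qed
  finally show ?thesis using aI by simp
qed


definition circ :: "real \<Rightarrow> real \<Rightarrow> (real^3) set" where
  "circ h \<rho> = {q. q$3 = h \<and> (q$1)^2 + (q$2)^2 = \<rho>^2}"

lemma norm3: "norm (x::real^3) = sqrt ((x$1)^2 + (x$2)^2 + (x$3)^2)"
  by (simp add: norm_vec_def L2_set_def sum_3)
lemma norm2: "norm (x::real^2) = sqrt ((x$1)^2 + (x$2)^2)"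
  by (simp add: norm_vec_def L2_set_def sum_2)

lemma axis3_nth [simp]:
  "(axis 1 (1::real) :: real^3) $ 1 = 1" "(axis 1 (1::real) :: real^3) $ 2 = 0" "(axis 1 (1::real) :: real^3) $ 3 = 0"
  "(axis 2 (1::real) :: real^3) $ 1 = 0" "(axis 2 (1::real) :: real^3) $ 2 = 1" "(axis 2 (1::real) :: real^3) $ 3 = 0"
  "(axis 3 (1::real) :: real^3) $ 1 = 0" "(axis 3 (1::real) :: real^3) $ 2 = 0" "(axis 3 (1::real) :: real^3) $ 3 = 1"
  by (simp_all add: axis_def)

definition Lin :: "complex \<Rightarrow> real^3" where "Lin z = Re z *\<^sub>R axis 1 1 + Im z *\<^sub>R axis 2 1"

lemma Lin_nth [simp]: "Lin z $ 1 = Re z" "Lin z $ 2 = Im z" "Lin z $ 3 = 0"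
  by (simp_all add: Lin_def)

lemma linear_Lin: "linear Lin"
  by (rule linearI) (simp_all add: vec_eq_iff forall_3)

lemma norm_Lin: "norm (Lin z) = norm z"
  by (simp add: norm3 cmod_def)

lemma inj_Lin: "inj Lin"
proof (rule injI)
  fix x y assume "Lin x = Lin y"
  then have "Re x = Re y" "Im x = Im y" by (metis Lin_nth(1), metis Lin_nth(2))
  then show "x = y" by (simp add: complex_eq_iff)
qed


lemma circle_path_exists:
  fixes h \<rho> :: real
  assumes rho: "\<rho> > 0"
  defines "\<gamma>0 \<equiv> (\<lambda>x. h *\<^sub>R axis 3 1 + x) \<circ> (Lin \<circ> circlepath 0 \<rho>)"
  shows "simple_path \<gamma>0" "pathfinish \<gamma>0 = pathstart \<gamma>0"
    "\<And>t. (\<gamma>0 has_vector_derivative Lin (2 * pi * \<i> * \<rho> * exp (2 * of_real pi * \<i> * t))) (at t)"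
    "\<gamma>0 C1_differentiable_on {0..1}"
    "\<And>t::real. norm (Lin (2 * pi * \<i> * \<rho> * exp (2 * of_real pi * \<i> * of_real t))) = 2 * pi * \<rho>"
    "path_image \<gamma>0 = circ h \<rho>"
proof -
  show "simple_path \<gamma>0" unfolding \<gamma>0_def
    by (simp add: simple_path_translation_eq simple_path_linear_image_eq[OF linear_Lin inj_Lin]
         simple_path_circlepath rho less_imp_neq[OF rho, symmetric])
  show "pathfinish \<gamma>0 = pathstart \<gamma>0" unfolding \<gamma>0_def
    by (simp add: pathfinish_compose pathstart_compose)
  have bl: "bounded_linear Lin" using linear_Lin by (simp add: linear_conv_bounded_linear)
  show der: "(\<gamma>0 has_vector_derivative Lin (2 * pi * \<i> * \<rho> * exp (2 * of_real pi * \<i> * t))) (at t)" for t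
  proof -
    have "((\<lambda>t. Lin (circlepath 0 \<rho> t)) has_vector_derivative Lin (2 * pi * \<i> * \<rho> * exp (2 * of_real pi * \<i> * t))) (at t)"
      by (rule bounded_linear.has_vector_derivative[OF bl has_vector_derivative_circlepath])
    then have "((\<lambda>t. h *\<^sub>R axis 3 1 + Lin (circlepath 0 \<rho> t)) has_vector_derivative 0 + Lin (2 * pi * \<i> * \<rho> * exp (2 * of_real pi * \<i> * t))) (at t)"
      by (rule has_vector_derivative_add[OF has_vector_derivative_const])
    then show ?thesis by (simp add: \<gamma>0_def o_def)
  qed
  have cD: "continuous_on {0..1} (\<lambda>t::real. Lin (2 * pi * \<i> * \<rho> * exp (2 * of_real pi * \<i> * of_real t)))"
    unfolding Lin_def by (intro continuous_intros)
  show "\<gamma>0 C1_differentiable_on {0..1}"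
    unfolding C1_differentiable_on_def
    by (rule exI[where x="\<lambda>t::real. Lin (2 * pi * \<i> * \<rho> * exp (2 * of_real pi * \<i> * of_real t))"])
       (use der cD in blast)
  show "norm (Lin (2 * pi * \<i> * \<rho> * exp (2 * of_real pi * \<i> * of_real t))) = 2 * pi * \<rho>" for t :: real
    using rho by (simp add: norm_Lin norm_mult)
  show "path_image \<gamma>0 = circ h \<rho>"
  proof -
    have "path_image \<gamma>0 = (\<lambda>x. h *\<^sub>R axis 3 1 + x) ` Lin ` sphere 0 \<rho>"
      unfolding \<gamma>0_def using rho by (simp add: path_image_compose)
    also have "\<dots> = circ h \<rho>"
    proof (intro equalityI subsetI)
      fix q assume "q \<in> (\<lambda>x. h *\<^sub>R axis 3 1 + x) ` Lin ` sphere 0 \<rho>"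
      then obtain z where z: "norm z = \<rho>" "q = h *\<^sub>R axis 3 1 + Lin z" by auto
      have "(Re z)^2 + (Im z)^2 = \<rho>^2" using z(1) by (simp add: cmod_power2[symmetric])
      then show "q \<in> circ h \<rho>" using z(2) by (simp add: circ_def)
    next
      fix q assume q: "q \<in> circ h \<rho>"
      define z where "z = Complex (q$1) (q$2)"
      have "norm z = \<rho>" using q rho unfolding z_def circ_def
        by (simp add: cmod_def)
      moreover have "q = h *\<^sub>R axis 3 1 + Lin z"
        using q unfolding z_def circ_def by (simp add: vec_eq_iff forall_3)
      ultimately show "q \<in> (\<lambda>x. h *\<^sub>R axis 3 1 + x) ` Lin ` sphere 0 \<rho>" by auto
    qed
    finally show ?thesis .
  qed
qed


lemma vec_deriv_within_const_zero:
  fixes g :: "real \<Rightarrow> real"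
  assumes "(g has_vector_derivative d) (at t within {0..1})" "t \<in> {0..1}"
    and "\<And>s. s \<in> {0..1} \<Longrightarrow> g s = k"
  shows "d = 0"
proof -
  have "((\<lambda>s. k) has_vector_derivative 0) (at t within {0..1})" by (rule has_vector_derivative_const)
  then have "(g has_vector_derivative 0) (at t within {0..1})"
    by (rule has_vector_derivative_transform_within[where d=1]) (use assms in auto)
  then have "vector_derivative g (at t within {0..1}) = 0"
    using assms(2) by (intro vector_derivative_within_closed_interval) auto
  moreover have "vector_derivative g (at t within {0..1}) = d"
    using assms by (intro vector_derivative_within_closed_interval) auto
  ultimately show ?thesis by simp
qed

lemma line_int_circle:
  fixes h \<rho> c :: real and f :: "real^3 \<Rightarrow> real"
  assumes rho: "\<rho> > 0" and fc: "\<And>q. q \<in> circ h \<rho> \<Longrightarrow> f q = c"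
  shows "line_int (circ h \<rho>) f = 2 * pi * \<rho> * c"
  unfolding line_int_def
proof (rule the_equality)
  define \<gamma>0 where "\<gamma>0 \<equiv> (\<lambda>x. h *\<^sub>R axis 3 1 + x) \<circ> (Lin \<circ> circlepath 0 \<rho>)"
  note E = circle_path_exists[OF rho, of h, folded \<gamma>0_def]
  define V where "V t = Lin (2 * pi * \<i> * \<rho> * exp (2 * of_real pi * \<i> * of_real t))" for t :: real
  have vd: "vector_derivative \<gamma>0 (at t within {0..1}) = V t" if "t \<in> {0..1}" for t
    using that E(3)[of t] unfolding V_def by (intro vector_derivative_at_within_ivl) auto
  have nV: "norm (V t) = 2 * pi * \<rho>" for t unfolding V_def using rho by (simp add: norm_Lin norm_mult)
  show "\<exists>\<gamma>::real \<Rightarrow> real^3. simple_path \<gamma> \<and> pathfinish \<gamma> = pathstart \<gamma> \<and>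
      \<gamma> C1_differentiable_on {0..1} \<and>
      (\<forall>t\<in>{0..1}. vector_derivative \<gamma> (at t within {0..1}) \<noteq> 0) \<and>
      path_image \<gamma> = circ h \<rho> \<and>
      2 * pi * \<rho> * c = integral {0..1} (\<lambda>t. f (\<gamma> t) * norm (vector_derivative \<gamma> (at t within {0..1})))"
  proof (intro exI conjI ballI)
    show "simple_path \<gamma>0" "pathfinish \<gamma>0 = pathstart \<gamma>0" "\<gamma>0 C1_differentiable_on {0..1}"
      "path_image \<gamma>0 = circ h \<rho>" using E by auto
    show "vector_derivative \<gamma>0 (at t within {0..1}) \<noteq> 0" if "t \<in> {0..1}" for t
      using vd[OF that] nV[of t] rho by (metis norm_zero pi_gt_zero mult_pos_pos zero_less_numeral less_irrefl)
    have "integral {0..1} (\<lambda>t. f (\<gamma>0 t) * norm (vector_derivative \<gamma>0 (at t within {0..1})))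
        = integral {0..1} (\<lambda>t::real. c * (2 * pi * \<rho>))"
    proof (rule integral_cong)
      fix t :: real assume t: "t \<in> {0..1}"
      have "\<gamma>0 t \<in> circ h \<rho>" using E(6) t by (auto simp: path_image_def)
      then show "f (\<gamma>0 t) * norm (vector_derivative \<gamma>0 (at t within {0..1})) = c * (2 * pi * \<rho>)"
        using fc vd[OF t] nV[of t] by simp
    qed
    then show "2 * pi * \<rho> * c = integral {0..1} (\<lambda>t. f (\<gamma>0 t) * norm (vector_derivative \<gamma>0 (at t within {0..1})))"
      by simp
  qed
next
  fix I
  assume "\<exists>\<gamma>::real \<Rightarrow> real^3. simple_path \<gamma> \<and> pathfinish \<gamma> = pathstart \<gamma> \<and>
      \<gamma> C1_differentiable_on {0..1} \<and>
      (\<forall>t\<in>{0..1}. vector_derivative \<gamma> (at t within {0..1}) \<noteq> 0) \<and>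
      path_image \<gamma> = circ h \<rho> \<and>
      I = integral {0..1} (\<lambda>t. f (\<gamma> t) * norm (vector_derivative \<gamma> (at t within {0..1})))"
  then obtain \<gamma> :: "real \<Rightarrow> real^3" where sp: "simple_path \<gamma>" and cl: "pathfinish \<gamma> = pathstart \<gamma>"
    and C1: "\<gamma> C1_differentiable_on {0..1}"
    and nz: "\<And>t. t \<in> {0..1} \<Longrightarrow> vector_derivative \<gamma> (at t within {0..1}) \<noteq> 0"
    and img: "path_image \<gamma> = circ h \<rho>"
    and I: "I = integral {0..1} (\<lambda>t. f (\<gamma> t) * norm (vector_derivative \<gamma> (at t within {0..1})))"
    by blast
  obtain D where D: "\<And>t. t \<in> {0..1} \<Longrightarrow> (\<gamma> has_vector_derivative D t) (at t)"
    and contD: "continuous_on {0..1} D"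
    using C1 unfolding C1_differentiable_on_def by blast
  have vd: "vector_derivative \<gamma> (at t within {0..1}) = D t" if "t \<in> {0..1}" for t
    using that D[OF that] by (intro vector_derivative_at_within_ivl) auto
  have onc: "\<gamma> t \<in> circ h \<rho>" if "t \<in> {0..1}" for t using img that by (auto simp: path_image_def)
  have Dc: "((\<lambda>s. \<gamma> s $ i) has_vector_derivative D t $ i) (at t)" if "t \<in> {0..1}" for t i
    using bounded_linear.has_vector_derivative[OF bounded_linear_vec_nth D[OF that]] .
  have D3: "D t $ 3 = 0" if t: "t \<in> {0..1}" for t
  proof (rule vec_deriv_within_const_zero[where g="\<lambda>s. \<gamma> s $ 3" and k=h])
    show "((\<lambda>s. \<gamma> s $ 3) has_vector_derivative D t $ 3) (at t within {0..1})"
      using Dc[OF t] by (rule has_vector_derivative_at_within)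
    show "t \<in> {0..1}" by fact
    show "\<gamma> s $ 3 = h" if "s \<in> {0..1}" for s using onc[OF that] by (simp add: circ_def)
  qed
  define \<beta> where "\<beta> t = Complex (\<gamma> t $ 1 / \<rho>) (\<gamma> t $ 2 / \<rho>)" for t
  define B where "B t = Complex (D t $ 1 / \<rho>) (D t $ 2 / \<rho>)" for t
  have derB: "(\<beta> has_vector_derivative B t) (at t)" if t: "t \<in> {0..1}" for t
    unfolding has_vector_derivative_complex_iff \<beta>_def B_def
    using Dc[OF t, of 1] Dc[OF t, of 2] rho
    by (auto intro!: derivative_eq_intros simp: has_real_derivative_iff_has_vector_derivative[symmetric])
  have contB: "continuous_on {0..1} B"
    unfolding B_def using rho by (intro continuous_intros contD) auto
  have Bnz: "B t \<noteq> 0" if t: "t \<in> {0..1}" for t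
  proof
    assume "B t = 0"
    then have "D t $ 1 = 0" "D t $ 2 = 0" using rho by (auto simp: B_def complex_eq_iff)
    then have "D t = 0" using D3[OF t] by (simp add: vec_eq_iff forall_3)
    then show False using nz[OF t] vd[OF t] by simp
  qed
  have n1: "norm (\<beta> t) = 1" if t: "t \<in> {0..1}" for t
  proof -
    have "(\<gamma> t $ 1)^2 + (\<gamma> t $ 2)^2 = \<rho>^2" using onc[OF t] by (simp add: circ_def)
    then have "(\<gamma> t $ 1 / \<rho>)^2 + (\<gamma> t $ 2 / \<rho>)^2 = 1" using rho
      by (simp add: power_divide add_divide_distrib[symmetric])
    then show ?thesis by (simp add: \<beta>_def cmod_def)
  qed
  have pathg: "path \<gamma>" using sp by (rule simple_path_imp_path)
  have pathb: "path \<beta>"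
    using pathg rho unfolding path_def \<beta>_def by (intro continuous_intros) auto
  have lf: "loop_free \<gamma>" using sp by (simp add: simple_path_def)
  have "loop_free \<beta>"
    unfolding loop_free_def
  proof (intro ballI impI)
    fix x y assume x: "x \<in> {0..1}" and y: "y \<in> {0..1}" and e: "\<beta> x = \<beta> y"
    then have "\<gamma> x $ 1 = \<gamma> y $ 1" "\<gamma> x $ 2 = \<gamma> y $ 2" using rho by (auto simp: \<beta>_def complex_eq_iff)
    moreover have "\<gamma> x $ 3 = \<gamma> y $ 3" using onc[OF x] onc[OF y] by (simp add: circ_def)
    ultimately have "\<gamma> x = \<gamma> y" by (simp add: vec_eq_iff forall_3)
    then show "x = y \<or> x = 0 \<and> y = 1 \<or> x = 1 \<and> y = 0"
      using lf x y unfolding loop_free_def by blast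
  qed
  then have spb: "simple_path \<beta>" using pathb by (simp add: simple_path_def)
  have clb: "pathfinish \<beta> = pathstart \<beta>"
    using cl by (simp add: pathfinish_def pathstart_def \<beta>_def)
  have core: "integral {0..1} (\<lambda>t. norm (B t)) = 2 * pi"
    by (rule circle_length_core[OF derB contB Bnz n1 spb clb])
  have nD: "norm (D t) = \<rho> * norm (B t)" if t: "t \<in> {0..1}" for t
  proof -
    have "\<rho> * norm (B t) = sqrt (\<rho>^2) * sqrt ((D t $ 1 / \<rho>)^2 + (D t $ 2 / \<rho>)^2)"
      using rho by (simp add: B_def cmod_def)
    also have "\<dots> = sqrt (\<rho>^2 * ((D t $ 1 / \<rho>)^2 + (D t $ 2 / \<rho>)^2))"
      by (simp add: real_sqrt_mult)
    also have "\<rho>^2 * ((D t $ 1 / \<rho>)^2 + (D t $ 2 / \<rho>)^2) = (D t $ 1)^2 + (D t $ 2)^2"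
      using rho by (simp add: field_simps)
    finally show ?thesis using D3[OF t] by (simp add: norm3)
  qed
  have "I = integral {0..1} (\<lambda>t. (c * \<rho>) * norm (B t))"
    unfolding I
  proof (rule integral_cong)
    fix t :: real assume t: "t \<in> {0..1}"
    show "f (\<gamma> t) * norm (vector_derivative \<gamma> (at t within {0..1})) = c * \<rho> * norm (B t)"
      using fc[OF onc[OF t]] vd[OF t] nD[OF t] by simp
  qed
  also have "\<dots> = (c * \<rho>) * (2 * pi)"
    using core integral_mult[of "\<lambda>t. norm (B t)" "{0..1}" "c * \<rho>"] by simp
  finally show "I = 2 * pi * \<rho> * c" by simp
qed




inductive Kr :: "(real^2 \<Rightarrow> real) \<Rightarrow> bool" where
  Kconst: "Kr (\<lambda>x. c)"
| Kcoord: "Kr (\<lambda>x. x $ i)"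
| Kadd: "Kr f \<Longrightarrow> Kr g \<Longrightarrow> Kr (\<lambda>x. f x + g x)"
| Kmul: "Kr f \<Longrightarrow> Kr g \<Longrightarrow> Kr (\<lambda>x. f x * g x)"
| Kinv: "Kr f \<Longrightarrow> (\<forall>x. f x \<noteq> 0) \<Longrightarrow> Kr (\<lambda>x. inverse (f x))"

lemma Kneg: "Kr f \<Longrightarrow> Kr (\<lambda>x. - f x)"
proof -
  assume "Kr f"
  then have "Kr (\<lambda>x. (-1) * f x)" by (intro Kmul Kconst)
  then show ?thesis by simp
qed

lemma fd_eq: "(f has_derivative f') (at x) \<Longrightarrow> frechet_derivative f (at x) = f'"
  by (metis frechet_derivative_at)

lemma Kr_deriv: "Kr f \<Longrightarrow> (\<forall>x. f differentiable (at x)) \<and> (\<forall>v. Kr (\<lambda>x. frechet_derivative f (at x) v))"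
proof (induction rule: Kr.induct)
  case (Kconst c)
  have d: "((\<lambda>x::real^2. c) has_derivative (\<lambda>h. 0)) (at x)" for x by simp
  show ?case
  proof (intro conjI allI)
    show "(\<lambda>x::real^2. c) differentiable at x" for x using d by (auto simp: differentiable_def)
    show "Kr (\<lambda>x. frechet_derivative (\<lambda>x::real^2. c) (at x) v)" for v
      using fd_eq[OF d] Kr.Kconst[of 0] by simp
  qed
next
  case (Kcoord i)
  have d: "((\<lambda>x::real^2. x $ i) has_derivative (\<lambda>h. h $ i)) (at x)" for x
    by (rule bounded_linear_imp_has_derivative[OF bounded_linear_vec_nth])
  show ?case
  proof (intro conjI allI)
    show "(\<lambda>x::real^2. x $ i) differentiable at x" for x using d by (auto simp: differentiable_def)
    show "Kr (\<lambda>x. frechet_derivative (\<lambda>x::real^2. x $ i) (at x) v)" for v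
      using fd_eq[OF d] Kr.Kconst[of "v $ i"] by simp
  qed
next
  case (Kadd f g)
  have d: "((\<lambda>x. f x + g x) has_derivative (\<lambda>h. frechet_derivative f (at x) h + frechet_derivative g (at x) h)) (at x)" for x
    using Kadd.IH by (intro has_derivative_add) (auto simp: frechet_derivative_works[symmetric])
  show ?case
  proof (intro conjI allI)
    show "(\<lambda>x. f x + g x) differentiable at x" for x using d by (auto simp: differentiable_def)
    show "Kr (\<lambda>x. frechet_derivative (\<lambda>x. f x + g x) (at x) v)" for v
      using fd_eq[OF d] Kadd.IH by (simp add: Kr.Kadd)
  qed
next
  case (Kmul f g)
  have d: "((\<lambda>x. f x * g x) has_derivative (\<lambda>h. f x * frechet_derivative g (at x) h + frechet_derivative f (at x) h * g x)) (at x)" for x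
    using Kmul.IH by (intro has_derivative_mult) (auto simp: frechet_derivative_works[symmetric])
  show ?case
  proof (intro conjI allI)
    show "(\<lambda>x. f x * g x) differentiable at x" for x using d by (auto simp: differentiable_def)
    show "Kr (\<lambda>x. frechet_derivative (\<lambda>x. f x * g x) (at x) v)" for v
      using fd_eq[OF d] Kmul.IH Kmul.hyps by (simp add: Kr.Kadd Kr.Kmul)
  qed
next
  case (Kinv f)
  have d: "((\<lambda>x. inverse (f x)) has_derivative (\<lambda>h. - (inverse (f x) * frechet_derivative f (at x) h * inverse (f x)))) (at x)" for x
  proof (rule Deriv.has_derivative_inverse)
    show "f x \<noteq> 0" using Kinv.hyps by auto
    show "(f has_derivative frechet_derivative f (at x)) (at x)"
      using Kinv.IH by (auto simp: frechet_derivative_works[symmetric])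
  qed
  show ?case
  proof (intro conjI allI)
    show "(\<lambda>x. inverse (f x)) differentiable at x" for x using d by (auto simp: differentiable_def)
    show "Kr (\<lambda>x. frechet_derivative (\<lambda>x. inverse (f x)) (at x) v)" for v
    proof -
      have "Kr (\<lambda>x. inverse (f x))" using Kinv.hyps by (rule Kr.Kinv)
      then have "Kr (\<lambda>x. - (inverse (f x) * frechet_derivative f (at x) v * inverse (f x)))"
        using Kinv.IH by (intro Kneg Kr.Kmul) auto
      then show ?thesis using fd_eq[OF d] by simp
    qed
  qed
qed

inductive Kv :: "(real^2 \<Rightarrow> real^3) \<Rightarrow> bool" where
  Kvsc: "Kr f \<Longrightarrow> Kv (\<lambda>x. f x *\<^sub>R w)"
| Kvadd: "Kv f \<Longrightarrow> Kv g \<Longrightarrow> Kv (\<lambda>x. f x + g x)"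

lemma Kv_deriv: "Kv f \<Longrightarrow> (\<forall>x. f differentiable (at x)) \<and> (\<forall>v. Kv (\<lambda>x. frechet_derivative f (at x) v))"
proof (induction rule: Kv.induct)
  case (Kvsc f w)
  note IH = Kr_deriv[OF Kvsc]
  have d: "((\<lambda>x. f x *\<^sub>R w) has_derivative (\<lambda>h. frechet_derivative f (at x) h *\<^sub>R w)) (at x)" for x
    using has_derivative_scaleR[OF _ has_derivative_const, of f "frechet_derivative f (at x)" x UNIV w] IH
    by (auto simp: frechet_derivative_works[symmetric])
  show ?case
  proof (intro conjI allI)
    show "(\<lambda>x. f x *\<^sub>R w) differentiable at x" for x using d by (auto simp: differentiable_def)
    show "Kv (\<lambda>x. frechet_derivative (\<lambda>x. f x *\<^sub>R w) (at x) v)" for v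
      using fd_eq[OF d] IH by (simp add: Kv.Kvsc)
  qed
next
  case (Kvadd f g)
  have d: "((\<lambda>x. f x + g x) has_derivative (\<lambda>h. frechet_derivative f (at x) h + frechet_derivative g (at x) h)) (at x)" for x
    using Kvadd.IH by (intro has_derivative_add) (auto simp: frechet_derivative_works[symmetric])
  show ?case
  proof (intro conjI allI)
    show "(\<lambda>x. f x + g x) differentiable at x" for x using d by (auto simp: differentiable_def)
    show "Kv (\<lambda>x. frechet_derivative (\<lambda>x. f x + g x) (at x) v)" for v
      using fd_eq[OF d] Kvadd.IH by (simp add: Kv.Kvadd)
  qed
qed

lemma Kr_smooth: "Kr f \<Longrightarrow> smooth_on_open f UNIV"
proof -
  assume K: "Kr f"
  have "Kr (iter_dderiv vs f)" for vs
  proof (induction vs)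
    case Nil then show ?case using K by simp
  next
    case (Cons v vs) then show ?case using Kr_deriv by simp
  qed
  then show ?thesis unfolding smooth_on_open_def
    using Kr_deriv by (auto simp: differentiable_on_def intro: differentiable_at_withinI)
qed

lemma Kv_smooth: "Kv f \<Longrightarrow> smooth_on_open f UNIV"
proof -
  assume K: "Kv f"
  have "Kv (iter_dderiv vs f)" for vs
  proof (induction vs)
    case Nil then show ?case using K by simp
  next
    case (Cons v vs) then show ?case using Kv_deriv by simp
  qed
  then show ?thesis unfolding smooth_on_open_def
    using Kv_deriv by (auto simp: differentiable_on_def intro: differentiable_at_withinI)
qed




lemma axis2_nth [simp]:
  "(axis 1 (1::real) :: real^2) $ 1 = 1" "(axis 1 (1::real) :: real^2) $ 2 = 0"
  "(axis 2 (1::real) :: real^2) $ 1 = 0" "(axis 2 (1::real) :: real^2) $ 2 = 1"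
  by (simp_all add: axis_def)

definition den :: "real^2 \<Rightarrow> real" where "den u = 1 + u$1*u$1 + u$2*u$2"

lemma den_pos: "den u > 0"
  unfolding den_def by (simp add: add_pos_nonneg)

lemma den_nz [simp]: "den u \<noteq> 0" using den_pos[of u] by linarith

definition chi :: "real^2 \<Rightarrow> real^3" where
  "chi u = (2*u$1/den u) *\<^sub>R axis 1 1 + (2*u$2/den u) *\<^sub>R axis 2 1 + ((1 - u$1*u$1 - u$2*u$2)/den u) *\<^sub>R axis 3 1"

lemma chi_nth [simp]: "chi u $ 1 = 2*u$1/den u" "chi u $ 2 = 2*u$2/den u"
  "chi u $ 3 = (1 - u$1*u$1 - u$2*u$2)/den u"
  by (simp_all add: chi_def)

lemma norm_chi: "norm (chi u) = 1"
proof -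
  have num: "(2*u$1)^2 + (2*u$2)^2 + (1 - u$1*u$1 - u$2*u$2)^2 = (den u)^2"
    unfolding den_def by algebra
  have "(2*u$1/den u)^2 + (2*u$2/den u)^2 + ((1 - u$1*u$1 - u$2*u$2)/den u)^2
      = ((2*u$1)^2 + (2*u$2)^2 + (1 - u$1*u$1 - u$2*u$2)^2) / (den u)^2"
    by (simp add: power_divide add_divide_distrib)
  then have "(2*u$1/den u)^2 + (2*u$2/den u)^2 + ((1 - u$1*u$1 - u$2*u$2)/den u)^2 = 1"
    using num by simp
  then show ?thesis by (simp add: norm3)
qed

definition phR :: "real \<Rightarrow> real^2 \<Rightarrow> real^3" where "phR R u = R *\<^sub>R chi u"

lemma Kr_den: "Kr den"
proof -
  have "Kr (\<lambda>u::real^2. (1 + u$1*u$1) + u$2*u$2)" by (intro Kadd Kmul Kconst Kcoord)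
  then show ?thesis by (simp add: den_def[abs_def])
qed

lemma Kv_phR: "Kv (phR R)"
proof -
  have Ki: "Kr (\<lambda>u. inverse (den u))" using Kr_den by (rule Kinv) simp
  have "Kv (\<lambda>u. (R * (2 * u$1) * inverse (den u)) *\<^sub>R axis 1 1 + (R * (2 * u$2) * inverse (den u)) *\<^sub>R axis 2 1
      + (R * ((1 + (- (u$1*u$1) + - (u$2*u$2)))) * inverse (den u)) *\<^sub>R axis 3 1)"
    by (intro Kvadd Kvsc Kmul Ki Kconst Kcoord Kadd Kneg)
  moreover have "(\<lambda>u. (R * (2 * u$1) * inverse (den u)) *\<^sub>R axis 1 1 + (R * (2 * u$2) * inverse (den u)) *\<^sub>R axis 2 1
      + (R * ((1 + (- (u$1*u$1) + - (u$2*u$2)))) * inverse (den u)) *\<^sub>R axis 3 1) = phR R"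
    by (rule ext) (simp add: phR_def vec_eq_iff forall_3 divide_inverse algebra_simps)
  ultimately show ?thesis by simp
qed

lemma smooth_phR: "smooth_on_open (phR R) UNIV"
  by (rule Kv_smooth[OF Kv_phR])

lemma has_derivative_vec_nth' [derivative_intros]:
  "(f has_derivative f') F \<Longrightarrow> ((\<lambda>x. f x $ i) has_derivative (\<lambda>h. f' h $ i)) F"
  using bounded_linear.has_derivative[OF bounded_linear_vec_nth] by blast

definition dchi :: "real^2 \<Rightarrow> real^2 \<Rightarrow> real^3" where
  "dchi u h = (2*h$1/den u - 4*u$1*(u$1*h$1 + u$2*h$2)/(den u)^2) *\<^sub>R axis 1 1
     + (2*h$2/den u - 4*u$2*(u$1*h$1 + u$2*h$2)/(den u)^2) *\<^sub>R axis 2 1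
     + (- 4*(u$1*h$1 + u$2*h$2)/(den u)^2) *\<^sub>R axis 3 1"

lemma has_derivative_chi: "(chi has_derivative dchi u) (at u)"
proof -
  have dd: "(den has_derivative (\<lambda>h. 2*(u$1*h$1 + u$2*h$2))) (at u)"
    unfolding den_def[abs_def]
    by (rule derivative_eq_intros refl | simp)+ (simp add: algebra_simps)
  have c1: "((\<lambda>u. 2*u$1/den u) has_derivative (\<lambda>h. 2*h$1/den u - 4*u$1*(u$1*h$1 + u$2*h$2)/(den u)^2)) (at u)"
    by (rule derivative_eq_intros dd refl | simp)+ (simp add: field_simps power2_eq_square)
  have c2: "((\<lambda>u. 2*u$2/den u) has_derivative (\<lambda>h. 2*h$2/den u - 4*u$2*(u$1*h$1 + u$2*h$2)/(den u)^2)) (at u)"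
    by (rule derivative_eq_intros dd refl | simp)+ (simp add: field_simps power2_eq_square)
  have e3: "(\<lambda>u. (1 - u$1*u$1 - u$2*u$2)/den u) = (\<lambda>u. 2 / den u - 1)"
  proof (rule ext)
    fix u :: "real^2"
    have "1 - u$1*u$1 - u$2*u$2 = 2 - den u" by (simp add: den_def)
    then have "(1 - u$1*u$1 - u$2*u$2)/den u = (2 - den u) / den u" by simp
    also have "\<dots> = 2 / den u - 1" by (simp add: diff_divide_distrib)
    finally show "(1 - u$1*u$1 - u$2*u$2)/den u = 2 / den u - 1" .
  qed
  have c3: "((\<lambda>u. (1 - u$1*u$1 - u$2*u$2)/den u) has_derivative (\<lambda>h. - 4*(u$1*h$1 + u$2*h$2)/(den u)^2)) (at u)"
    unfolding e3
    by (rule derivative_eq_intros dd refl | simp)+ (simp add: field_simps power2_eq_square)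
  have "((\<lambda>u. (2*u$1/den u) *\<^sub>R (axis 1 1::real^3) + (2*u$2/den u) *\<^sub>R axis 2 1 + ((1 - u$1*u$1 - u$2*u$2)/den u) *\<^sub>R axis 3 1)
     has_derivative dchi u) (at u)"
    unfolding dchi_def[abs_def]
    by (intro has_derivative_add has_derivative_scaleR_left c1 c2 c3)
  then show ?thesis by (simp add: chi_def[abs_def])
qed




lemma has_derivative_phR: "(phR R has_derivative (\<lambda>h. R *\<^sub>R dchi u h)) (at u)"
  unfolding phR_def[abs_def] by (intro has_derivative_scaleR_right has_derivative_chi)

lemma fd_phR: "frechet_derivative (phR R) (at u) = (\<lambda>h. R *\<^sub>R dchi u h)"
  using has_derivative_phR by (rule fd_eq)

lemma dchi_nth [simp]: "dchi u h $ 1 = 2*h$1/den u - 4*u$1*(u$1*h$1 + u$2*h$2)/(den u)^2"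
  "dchi u h $ 2 = 2*h$2/den u - 4*u$2*(u$1*h$1 + u$2*h$2)/(den u)^2"
  "dchi u h $ 3 = - 4*(u$1*h$1 + u$2*h$2)/(den u)^2"
  by (simp_all add: dchi_def)

lemma cross_alg_vec:
  fixes a b d :: real
  assumes d: "d = 1 + a*a + b*b" and dnz: "d \<noteq> 0"
  shows "cross3 ((2/d - 4*a*a/d^2) *\<^sub>R axis 1 1 + (-4*a*b/d^2) *\<^sub>R axis 2 1 + (-4*a/d^2) *\<^sub>R axis 3 1)
                ((-4*a*b/d^2) *\<^sub>R axis 1 1 + (2/d - 4*b*b/d^2) *\<^sub>R axis 2 1 + (-4*b/d^2) *\<^sub>R axis 3 1)
       = (4/d^2) *\<^sub>R ((2*a/d) *\<^sub>R axis 1 1 + (2*b/d) *\<^sub>R axis 2 1 + ((1 - a*a - b*b)/d) *\<^sub>R axis 3 1)"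
proof -
  define k where "k = inverse d"
  have k: "k * (1 + a*a + b*b) = 1" using d dnz by (simp add: k_def)
  have e1: "x / d = x * k" for x by (simp add: k_def divide_inverse)
  have e2: "x / d^2 = x * k * k" for x by (simp add: k_def divide_inverse power2_eq_square)
  show ?thesis
    unfolding vec_eq_iff forall_3 cross_components e1 e2
    using k by simp algebra
qed

lemma Nrm_phR: "Nrm (phR R) u = (4 * R^2 / (den u)^2) *\<^sub>R chi u"
proof -
  have p1: "pd1 (phR R) u = R *\<^sub>R dchi u (axis 1 1)" by (simp add: pd1_def fd_phR)
  have p2: "pd2 (phR R) u = R *\<^sub>R dchi u (axis 2 1)" by (simp add: pd2_def fd_phR)
  have c: "cross3 (dchi u (axis 1 1)) (dchi u (axis 2 1)) = (4 / (den u)^2) *\<^sub>R chi u"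
  proof -
    have a: "dchi u (axis 1 1) = (2/den u - 4*u$1*u$1/(den u)^2) *\<^sub>R axis 1 1 + (-4*u$1*u$2/(den u)^2) *\<^sub>R axis 2 1 + (-4*u$1/(den u)^2) *\<^sub>R axis 3 1"
      by (simp add: vec_eq_iff forall_3)
    have b: "dchi u (axis 2 1) = (-4*u$1*u$2/(den u)^2) *\<^sub>R axis 1 1 + (2/den u - 4*u$2*u$2/(den u)^2) *\<^sub>R axis 2 1 + (-4*u$2/(den u)^2) *\<^sub>R axis 3 1"
      by (simp add: vec_eq_iff forall_3)
    show ?thesis unfolding a b chi_def
      by (rule cross_alg_vec) (simp add: den_def, simp)
  qed
  show ?thesis
    by (simp add: Nrm_def p1 p2 cross_mult_left cross_mult_right c power2_eq_square)
qed


definition ss :: "real^2 \<Rightarrow> real" where "ss u = u$1*u$1 + u$2*u$2"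

lemma den_ss: "den u = 1 + ss u" by (simp add: den_def ss_def)

lemma ss_nonneg: "ss u \<ge> 0" by (simp add: ss_def)

lemma norm_u: "norm u = sqrt (ss u)" by (simp add: norm2 ss_def power2_eq_square)

lemma Disc_iff: "u \<in> Disc \<longleftrightarrow> ss u \<le> 1"
  by (simp add: Disc_def mem_cball dist_0_norm norm_u)

lemma ball_iff: "u \<in> ball 0 1 \<longleftrightarrow> ss u < 1"
  by (simp add: mem_ball dist_0_norm norm_u)

lemma sphere_iff: "u \<in> sphere 0 1 \<longleftrightarrow> ss u = 1"
  by (simp add: dist_0_norm norm_u)

lemma chi3_ss: "chi u $ 3 = (1 - ss u) / (1 + ss u)"
  by (simp add: ss_def den_def algebra_simps)

lemma chi3_pos_iff: "chi u $ 3 > 0 \<longleftrightarrow> ss u < 1"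
  unfolding chi3_ss using ss_nonneg[of u] by (simp add: zero_less_divide_iff)

lemma chi3_nonneg_iff: "chi u $ 3 \<ge> 0 \<longleftrightarrow> ss u \<le> 1"
  unfolding chi3_ss using ss_nonneg[of u] by (simp add: zero_le_divide_iff)

lemma chi3_zero_iff: "chi u $ 3 = 0 \<longleftrightarrow> ss u = 1"
  unfolding chi3_ss using ss_nonneg[of u] by simp

lemma norm_Nrm_phR: "norm (Nrm (phR R) u) = 4 * R^2 / (den u)^2"
  by (simp add: Nrm_phR norm_chi)

lemma unit_Nrm_phR: "R \<noteq> 0 \<Longrightarrow> Nrm (phR R) u /\<^sub>R norm (Nrm (phR R) u) = chi u"
  by (simp add: norm_Nrm_phR Nrm_phR norm_chi)

lemma inj_chi: "inj chi"
proof (rule injI)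
  fix u v assume e: "chi u = chi v"
  have "chi u $ 3 = chi v $ 3" using e by simp
  then have "(1 - ss u) / (1 + ss u) = (1 - ss v) / (1 + ss v)" by (simp only: chi3_ss)
  moreover have "(1 - ss w) / (1 + ss w) = 2 / (1 + ss w) - 1" for w
    using ss_nonneg[of w] by (simp add: field_simps)
  ultimately have "2 / (1 + ss u) = 2 / (1 + ss v)" by simp
  then have d: "den u = den v" using ss_nonneg[of u] ss_nonneg[of v] by (simp add: den_ss field_simps)
  have "chi u $ 1 = chi v $ 1" "chi u $ 2 = chi v $ 2" using e by simp_all
  then have "u$1 = v$1" "u$2 = v$2" using d by (simp_all add: field_simps)
  then show "u = v" by (simp add: vec_eq_iff forall_2)
qed

lemma inj_phR: "R \<noteq> 0 \<Longrightarrow> inj (phR R)"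
  using inj_chi by (simp add: inj_def phR_def)

lemma chi_surj:
  fixes q :: "real^3"
  assumes q: "norm q = 1" "q$3 \<ge> 0"
  shows "\<exists>u. chi u = q \<and> ss u \<le> 1"
proof -
  have sq: "(q$1)^2 + (q$2)^2 + (q$3)^2 = 1" using q(1) by (simp add: norm3)
  define t where "t = 1 + q$3"
  have t: "t > 0" using q(2) by (simp add: t_def)
  define u :: "real^2" where "u = vector [q$1 / t, q$2 / t]"
  have u1: "u$1 = q$1/t" and u2: "u$2 = q$2/t" by (simp_all add: u_def)
  have s: "ss u = (1 - q$3) / t"
  proof -
    have "ss u = ((q$1)^2 + (q$2)^2) / t^2" by (simp add: ss_def u1 u2 power2_eq_square add_divide_distrib)
    also have "(q$1)^2 + (q$2)^2 = (1 - q$3) * t" using sq by (simp add: t_def algebra_simps power2_eq_square)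
    finally show ?thesis using t by (simp add: power2_eq_square)
  qed
  have d: "den u = 2 / t" using t by (simp add: den_ss s field_simps t_def)
  have "chi u = q"
  proof -
    have "chi u $ 1 = q $ 1" using t by (simp add: d u1 field_simps)
    moreover have "chi u $ 2 = q $ 2" using t by (simp add: d u2 field_simps)
    moreover have "chi u $ 3 = q $ 3"
    proof -
      have "chi u $ 3 = (1 - ss u) / (1 + ss u)" by (rule chi3_ss)
      also have "\<dots> = q$3" using t unfolding s by (simp add: field_simps t_def)
      finally show ?thesis .
    qed
    ultimately show ?thesis by (simp add: vec_eq_iff forall_3)
  qed
  moreover have "ss u \<le> 1" using t q(2) by (simp add: s field_simps t_def)
  ultimately show ?thesis by blast
qed




lemma phR_nth3: "phR R u $ 3 = R * chi u $ 3" by (simp add: phR_def del: chi_nth)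

lemma norm_phR: "R > 0 \<Longrightarrow> norm (phR R u) = R"
  by (simp add: phR_def norm_chi)

lemma image_phR: assumes R: "R > 0"
  shows "phR R ` Disc = {q. norm q = R \<and> q$3 \<ge> 0}"
proof (intro equalityI subsetI)
  fix q assume "q \<in> phR R ` Disc"
  then obtain u where u: "u \<in> Disc" "q = phR R u" by auto
  have "chi u $ 3 \<ge> 0" using u(1) by (simp add: Disc_iff chi3_nonneg_iff del: chi_nth)
  then show "q \<in> {q. norm q = R \<and> q$3 \<ge> 0}"
    using u(2) R by (simp add: norm_phR phR_nth3 del: chi_nth)
next
  fix q :: "real^3" assume q: "q \<in> {q. norm q = R \<and> q$3 \<ge> 0}"
  have "norm (q /\<^sub>R R) = 1" using q R by simp
  have "(q /\<^sub>R R) $ 3 = q $ 3 / R" by (simp add: divide_inverse mult.commute)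
  then have "(q /\<^sub>R R) $ 3 \<ge> 0" using q R by simp
  note this \<open>norm (q /\<^sub>R R) = 1\<close>
  then obtain u where u: "chi u = q /\<^sub>R R" "ss u \<le> 1" using chi_surj by blast
  have "phR R u = q" using u(1) R by (simp add: phR_def)
  then show "q \<in> phR R ` Disc" using u(2) by (auto simp: Disc_iff)
qed

lemma S_phR: assumes R: "R > 0"
  shows "{x::real^3. 0 < x$3} - phR R ` Disc = {x. 0 < x$3 \<and> norm x \<noteq> R}"
  using R by (auto simp: image_phR)

lemma Omega_in: assumes R: "R > 0" and x: "0 < x$3" "norm x < R"
  shows "x \<in> Omega (phR R)"
proof -
  define S where "S = {x::real^3. 0 < x$3 \<and> norm x \<noteq> R}"
  have xS: "x \<in> S" using x by (simp add: S_def)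
  let ?C = "connected_component_set S x"
  have "ball 0 R \<inter> ?C = {} \<or> (- cball 0 R) \<inter> ?C = {}"
  proof (rule connectedD)
    show "connected ?C" by (rule connected_connected_component)
    show "open (ball (0::real^3) R)" by simp
    show "open (- cball (0::real^3) R)" by (simp add: open_Compl)
    show "ball 0 R \<inter> - cball 0 R \<inter> ?C = {}" by auto
    show "?C \<subseteq> ball 0 R \<union> - cball 0 R"
      using connected_component_subset[of S x] by (auto simp: S_def)
  qed
  moreover have "x \<in> ball 0 R \<inter> ?C" using xS x by simp
  ultimately have dis: "(- cball 0 R) \<inter> ?C = {}" by blast
  have "?C \<subseteq> ball 0 R"
  proof
    fix y assume y: "y \<in> ?C"
    have "y \<notin> - cball 0 R" using dis y by blast
    then have "norm y \<le> R" by (simp add: dist_0_norm)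
    moreover have "norm y \<noteq> R" using y connected_component_subset[of S x] by (force simp: S_def)
    ultimately show "y \<in> ball 0 R" by (simp add: dist_0_norm)
  qed
  then have "bounded ?C" using bounded_subset bounded_ball by blast
  then show ?thesis using xS unfolding Omega_def Let_def S_phR[OF R] S_def by simp
qed

lemma Omega_out: assumes R: "R > 0" and x: "0 < x$3" "norm x > R"
  shows "x \<notin> Omega (phR R)"
proof
  assume "x \<in> Omega (phR R)"
  then have b: "bounded (connected_component_set {x::real^3. 0 < x$3 \<and> norm x \<noteq> R} x)"
    unfolding Omega_def Let_def S_phR[OF R] by simp
  define L where "L = (\<lambda>\<tau>::real. \<tau> *\<^sub>R x) ` {1..}"
  have "L \<subseteq> connected_component_set {x::real^3. 0 < x$3 \<and> norm x \<noteq> R} x"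
  proof (rule connected_component_maximal)
    show "x \<in> L" unfolding L_def by (rule image_eqI[of _ _ 1]) auto
    show "connected L" unfolding L_def
      by (intro connected_continuous_image continuous_intros) simp
    show "L \<subseteq> {x. 0 < x $ 3 \<and> norm x \<noteq> R}"
    proof
      fix y assume "y \<in> L"
      then obtain \<tau> where t: "\<tau> \<ge> 1" "y = \<tau> *\<^sub>R x" unfolding L_def by auto
      have "norm y = \<tau> * norm x" using t by simp
      moreover have "\<tau> * norm x \<ge> norm x" using t(1) by (simp add: mult_le_cancel_right1)
      ultimately have "norm y > R" using x by simp
      moreover have "0 < y $ 3" using t x by simp
      ultimately show "y \<in> {x. 0 < x $ 3 \<and> norm x \<noteq> R}" by simp
    qed
  qed
  then have "bounded L" using b bounded_subset by blast
  then obtain B where B: "\<And>y. y \<in> L \<Longrightarrow> norm y \<le> B" unfolding bounded_iff by blast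
  define \<tau> where "\<tau> = (\<bar>B\<bar> + 1) / norm x + 1"
  have nx: "norm x > 0" using x R by linarith
  have "\<tau> \<ge> 1" using nx by (simp add: \<tau>_def)
  then have "\<tau> *\<^sub>R x \<in> L" unfolding L_def by auto
  then have "norm (\<tau> *\<^sub>R x) \<le> B" by (rule B)
  moreover have "norm (\<tau> *\<^sub>R x) = \<bar>B\<bar> + 1 + norm x" using nx
    by (simp add: \<tau>_def field_simps)
  ultimately have "\<bar>B\<bar> + 1 + norm x \<le> B" by simp
  then show False using abs_ge_self[of B] nx by linarith
qed

lemma out_sign_phR: assumes R: "R > 0" shows "out_sign (phR R) = 1"
proof -
  have "\<forall>u\<in>ball 0 1. \<forall>\<^sub>F t in at_right 0.
        phR R u + t *\<^sub>R (Nrm (phR R) u /\<^sub>R norm (Nrm (phR R) u)) \<notin> Omega (phR R) \<and>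
        phR R u - t *\<^sub>R (Nrm (phR R) u /\<^sub>R norm (Nrm (phR R) u)) \<in> Omega (phR R)"
  proof
    fix u :: "real^2" assume u: "u \<in> ball 0 1"
    have "ss u < 1" using u ball_iff by blast
    then have c3: "chi u $ 3 > 0" using chi3_pos_iff by blast
    show "\<forall>\<^sub>F t in at_right 0.
        phR R u + t *\<^sub>R (Nrm (phR R) u /\<^sub>R norm (Nrm (phR R) u)) \<notin> Omega (phR R) \<and>
        phR R u - t *\<^sub>R (Nrm (phR R) u /\<^sub>R norm (Nrm (phR R) u)) \<in> Omega (phR R)"
      using eventually_at_right_real[OF R]
    proof (rule eventually_mono)
      fix t :: real assume t: "t \<in> {0<..<R}"
      have e1: "phR R u + t *\<^sub>R (Nrm (phR R) u /\<^sub>R norm (Nrm (phR R) u)) = (R + t) *\<^sub>R chi u"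
        using R by (simp add: unit_Nrm_phR phR_def algebra_simps)
      have e2: "phR R u - t *\<^sub>R (Nrm (phR R) u /\<^sub>R norm (Nrm (phR R) u)) = (R - t) *\<^sub>R chi u"
        using R by (simp add: unit_Nrm_phR phR_def algebra_simps)
      have "(R + t) *\<^sub>R chi u \<notin> Omega (phR R)"
        by (rule Omega_out[OF R]) (use t c3 R in \<open>simp_all add: norm_chi del: chi_nth\<close>)
      moreover have "(R - t) *\<^sub>R chi u \<in> Omega (phR R)"
        by (rule Omega_in[OF R]) (use t c3 R in \<open>simp_all add: norm_chi del: chi_nth\<close>)
      ultimately show "phR R u + t *\<^sub>R (Nrm (phR R) u /\<^sub>R norm (Nrm (phR R) u)) \<notin> Omega (phR R) \<and>
        phR R u - t *\<^sub>R (Nrm (phR R) u /\<^sub>R norm (Nrm (phR R) u)) \<in> Omega (phR R)"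
        using e1 e2 by simp
    qed
  qed
  then show ?thesis unfolding out_sign_def by simp
qed

lemma nu_phR: "R > 0 \<Longrightarrow> nu (phR R) u = chi u"
  by (simp add: nu_def out_sign_phR unit_Nrm_phR)

lemma nu3_phR: "R > 0 \<Longrightarrow> nu3 (phR R) u = chi u $ 3"
  by (simp add: nu3_def nu_phR E3_def inner_axis del: chi_nth)




lemma inj_dphR: assumes "R \<noteq> 0" shows "inj (\<lambda>h. R *\<^sub>R dchi u h)"
proof (rule injI)
  fix x y assume "R *\<^sub>R dchi u x = R *\<^sub>R dchi u y"
  then have e: "dchi u x = dchi u y" using assms by simp
  define Px where "Px = u$1*x$1 + u$2*x$2"
  define Py where "Py = u$1*y$1 + u$2*y$2"
  have "- 4*Px/(den u)^2 = - 4*Py/(den u)^2"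
    using arg_cong[OF e, of "\<lambda>v. v $ 3"] by (simp add: Px_def Py_def)
  then have P: "Px = Py" by simp
  have "2*x$1/den u - 4*u$1*Px/(den u)^2 = 2*y$1/den u - 4*u$1*Py/(den u)^2"
    using arg_cong[OF e, of "\<lambda>v. v $ 1"] by (simp add: Px_def Py_def)
  then have "x$1 = y$1" unfolding P by simp
  have "2*x$2/den u - 4*u$2*Px/(den u)^2 = 2*y$2/den u - 4*u$2*Py/(den u)^2"
    using arg_cong[OF e, of "\<lambda>v. v $ 2"] by (simp add: Px_def Py_def)
  then have "x$2 = y$2" unfolding P by simp
  then show "x = y" using \<open>x$1 = y$1\<close> by (simp add: vec_eq_iff forall_2)
qed

lemma smooth_upto_const: "smooth_upto (\<lambda>u::real^2. c :: real) Disc"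
  unfolding smooth_upto_def
  by (rule exI[of _ "\<lambda>u. c"], rule exI[of _ UNIV]) (simp add: Kr_smooth Kconst)

lemma admissible_phR: assumes R: "R > 0" shows "admissible_disc (phR R)"
  unfolding admissible_disc_def
proof (intro conjI ballI)
  show "smooth_embedded_disc (phR R)"
    unfolding smooth_embedded_disc_def
  proof (intro conjI ballI)
    show "smooth_upto (phR R) Disc" unfolding smooth_upto_def
      by (rule exI[of _ "phR R"], rule exI[of _ UNIV]) (simp add: smooth_phR)
    show "inj_on (phR R) Disc" using inj_phR[of R] R by (simp add: inj_on_def inj_def)
    show "phR R differentiable at u" for u using has_derivative_phR by (auto simp: differentiable_def)
    show "inj (frechet_derivative (phR R) (at u))" for u using R by (simp add: fd_phR inj_dphR)
  qed
  show "0 < phR R u $ 3" if "u \<in> ball 0 1" for u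
  proof -
    have "ss u < 1" using that ball_iff by blast
    then have "chi u $ 3 > 0" using chi3_pos_iff by blast
    then show ?thesis using R by (simp add: phR_nth3 del: chi_nth)
  qed
  show "phR R u $ 3 = 0" if "u \<in> sphere 0 1" for u
  proof -
    have "ss u = 1" using that sphere_iff by blast
    then have "chi u $ 3 = 0" using chi3_zero_iff by blast
    then show ?thesis by (simp add: phR_nth3 del: chi_nth)
  qed
  show "\<exists>g. smooth_upto g Disc \<and> (\<forall>u\<in>ball 0 1. g u = nu3 (phR R) u / phR R u $ 3)"
  proof (rule exI[of _ "\<lambda>u::real^2. 1 / R"], intro conjI ballI)
    show "smooth_upto (\<lambda>u::real^2. 1 / R) Disc" by (rule smooth_upto_const)
    show "1 / R = nu3 (phR R) u / phR R u $ 3" if u: "u \<in> ball 0 1" for u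
    proof -
      have "ss u < 1" using u ball_iff by blast
      then have c: "chi u $ 3 > 0" using chi3_pos_iff by blast
      have "nu3 (phR R) u / phR R u $ 3 = chi u $ 3 / (R * chi u $ 3)"
        using R by (simp only: nu3_phR phR_nth3)
      also have "\<dots> = 1 / R" using c by (simp del: chi_nth)
      finally show ?thesis by simp
    qed
  qed
qed

definition fJ :: "real^2 \<Rightarrow> real" where "fJ u = 4 / (den u)^2"

lemma fJ_integrable: "fJ integrable_on ball 0 1"
proof (rule measurable_bounded_by_integrable_imp_integrable)
  have cd: "continuous_on UNIV den" unfolding den_def[abs_def] by (intro continuous_intros)
  have "continuous_on UNIV fJ" unfolding fJ_def[abs_def] by (intro continuous_intros cd) auto
  then show "fJ \<in> borel_measurable (lebesgue_on (ball 0 1))"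
    by (intro continuous_imp_measurable_on_sets_lebesgue) (auto intro: continuous_on_subset)
  show "(\<lambda>x. 4) integrable_on ball (0::real^2) 1" by (rule integrable_on_const) simp
  show "ball (0::real^2) 1 \<in> sets lebesgue" by simp
  fix x :: "real^2" assume "x \<in> ball 0 1"
  have "den x \<ge> 1" by (simp add: den_ss ss_nonneg)
  then have "(den x)^2 \<ge> 1" by (simp add: one_le_power)
  then show "norm (fJ x) \<le> 4" by (simp add: fJ_def field_simps)
qed

lemma J_pos: "integral (ball 0 1) fJ > 0"
proof -
  have "integral (ball (0::real^2) 1) (\<lambda>x. 1) \<le> integral (ball 0 1) fJ"
  proof (rule integral_le)
    show "(\<lambda>x. 1::real) integrable_on ball (0::real^2) 1" by (rule integrable_on_const) simp
    show "fJ integrable_on ball 0 1" by (rule fJ_integrable)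
    fix x :: "real^2" assume "x \<in> ball 0 1"
    then have "ss x < 1" using ball_iff by blast
    then have "den x < 2" "den x > 0" by (simp_all add: den_ss ss_nonneg add_pos_nonneg)
    then have "(den x)^2 < 2^2" using power_strict_mono[of "den x" 2 2] by simp
    then have "(den x)^2 < 4" by simp
    then show "1 \<le> fJ x" using \<open>den x > 0\<close> by (simp add: fJ_def field_simps)
  qed
  moreover have "integral (ball (0::real^2) 1) (\<lambda>x. 1) = measure lebesgue (ball (0::real^2) 1)"
    by (rule lmeasure_integral[symmetric]) simp
  moreover have "measure lebesgue (ball (0::real^2) 1) = measure lborel (ball (0::real^2) 1)"
    by (intro measure_completion) simp
  moreover have "measure lborel (ball (0::real^2) 1) > 0" by simp
  ultimately show ?thesis by linarith
qed

lemma U_R_phR: assumes R: "R > 0" shows "U_R (phR R) = - R * integral (ball 0 1) fJ"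
proof -
  have "surf_int (phR R) (ball 0 1) (\<lambda>u. nu3 (phR R) u / phR R u $ 3)
      = integral (ball 0 1) (\<lambda>u. R *\<^sub>R fJ u)"
    unfolding surf_int_def
  proof (rule integral_cong)
    fix u :: "real^2" assume u: "u \<in> ball 0 1"
    have "ss u < 1" using u ball_iff by blast
    then have "chi u $ 3 > 0" using chi3_pos_iff by blast
    then show "nu3 (phR R) u / phR R u $ 3 * norm (Nrm (phR R) u) = R *\<^sub>R fJ u"
      using R by (simp add: nu3_phR phR_nth3 norm_Nrm_phR fJ_def power2_eq_square del: chi_nth)
  qed
  then show ?thesis by (simp add: U_R_def)
qed




definition DZ :: "real \<Rightarrow> real" where "DZ \<tau> = - ((1 - \<tau>^2) / sqrt (1 - \<tau>^2))"

lemma chi_sq: "(chi u $ 1)^2 + (chi u $ 2)^2 + (chi u $ 3)^2 = 1"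
proof -
  have "sqrt ((chi u $ 1)^2 + (chi u $ 2)^2 + (chi u $ 3)^2) = 1"
    using norm_chi[of u] by (simp only: norm3)
  then show ?thesis by simp
qed

lemma dn_z_phR: assumes R: "R > 0" shows "dn_z (phR R) u = DZ (chi u $ 3)"
proof -
  define c where "c = chi u"
  define \<tau> where "\<tau> = c $ 3"
  have sq: "(c$1)^2 + (c$2)^2 = 1 - \<tau>^2" using chi_sq[of u] by (simp add: c_def \<tau>_def del: chi_nth)
  define g where "g = E3 - \<tau> *\<^sub>R c"
  have g1: "g $ 1 = - \<tau> * c $ 1" and g2: "g $ 2 = - \<tau> * c $ 2" and g3: "g $ 3 = 1 - \<tau> * \<tau>"
    by (simp_all add: g_def E3_def \<tau>_def)
  have "(g$1)^2 + (g$2)^2 + (g$3)^2 = \<tau>^2 * ((c$1)^2 + (c$2)^2) + (1 - \<tau>^2)^2"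
    by (simp add: g1 g2 g3 power2_eq_square algebra_simps)
  also have "\<dots> = 1 - \<tau>^2" unfolding sq by (simp add: power2_eq_square algebra_simps)
  finally have ng: "norm g = sqrt (1 - \<tau>^2)" by (simp add: norm3)
  have "dn_z (phR R) u = - ((g /\<^sub>R norm g) \<bullet> E3)"
    unfolding dn_z_def Let_def g_def using R by (simp add: nu3_phR nu_phR c_def \<tau>_def del: chi_nth)
  also have "\<dots> = - (g $ 3 / norm g)" by (simp add: E3_def inner_axis divide_inverse mult.commute)
  also have "\<dots> = DZ \<tau>" by (simp add: ng g3 DZ_def power2_eq_square)
  finally show ?thesis by (simp add: \<tau>_def c_def del: chi_nth)
qed

lemma level_phR: assumes R: "R > 0" and z: "0 < zl" "zl < R"
  shows "phR R ` {u\<in>Disc. phR R u $ 3 = zl} = circ zl (sqrt (R^2 - zl^2))"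
proof (intro equalityI subsetI)
  fix q assume "q \<in> phR R ` {u\<in>Disc. phR R u $ 3 = zl}"
  then obtain u where u: "u \<in> Disc" "phR R u $ 3 = zl" "q = phR R u" by auto
  have "norm q = R" using u(3) R by (simp add: norm_phR)
  then have "sqrt ((q$1)^2 + (q$2)^2 + (q$3)^2) = R" by (simp add: norm3)
  then have "(q$1)^2 + (q$2)^2 + (q$3)^2 = R^2" using R by (metis real_sqrt_ge_0_iff real_sqrt_pow2 sum_power2_ge_zero add_nonneg_nonneg zero_le_power2)
  moreover have "q$3 = zl" using u by simp
  ultimately show "q \<in> circ zl (sqrt (R^2 - zl^2))"
    using z R by (simp add: circ_def)
next
  fix q :: "real^3" assume q: "q \<in> circ zl (sqrt (R^2 - zl^2))"
  have q3: "q$3 = zl" using q by (simp add: circ_def)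
  have "R^2 - zl^2 \<ge> 0" using z R by (simp add: power_mono)
  then have "(q$1)^2 + (q$2)^2 = R^2 - zl^2" using q by (simp add: circ_def)
  then have "(q$1)^2 + (q$2)^2 + (q$3)^2 = R^2" using q3 by simp
  then have "norm q = R" using R by (simp add: norm3)
  then have "q \<in> phR R ` Disc" using q3 z R by (simp add: image_phR)
  then obtain u where "u \<in> Disc" "q = phR R u" by auto
  then show "q \<in> phR R ` {u\<in>Disc. phR R u $ 3 = zl}" using q3 by auto
qed

lemma the_phR: assumes R: "R > 0" and u: "u \<in> Disc"
  shows "(THE v. v \<in> Disc \<and> phR R v = phR R u) = u"
  using inj_phR[of R] R u by (intro the_equality) (auto simp: inj_def)

lemma line_level_phR: assumes R: "R > 0" and z: "0 < zl" "zl < R"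
  shows "line_int (phR R ` {u\<in>Disc. phR R u $ 3 = zl}) (\<lambda>p. dn_z (phR R) (THE u. u \<in> Disc \<and> phR R u = p))
    = 2 * pi * sqrt (R^2 - zl^2) * DZ (zl / R)"
  unfolding level_phR[OF R z]
proof (rule line_int_circle)
  show "sqrt (R^2 - zl^2) > 0" using z R by (simp add: power_strict_mono)
  fix q assume "q \<in> circ zl (sqrt (R^2 - zl^2))"
  then have "q \<in> phR R ` {u\<in>Disc. phR R u $ 3 = zl}" unfolding level_phR[OF R z] .
  then obtain u where u: "u \<in> Disc" "phR R u $ 3 = zl" "q = phR R u" by auto
  have "chi u $ 3 = zl / R" using u(2) R by (simp add: phR_nth3 field_simps del: chi_nth)
  then show "dn_z (phR R) (THE u. u \<in> Disc \<and> phR R u = q) = DZ (zl / R)"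
    using u the_phR[OF R u(1)] dn_z_phR[OF R] by simp
qed

definition FR :: "real \<Rightarrow> real \<Rightarrow> real" where
  "FR R zl = surf_int (phR R) {u\<in>Disc. (phR R u)$3 \<ge> zl} (\<lambda>u. 1 / ((phR R u)$3)\<^sup>2)
    + (1 / zl) * line_int (phR R ` {u\<in>Disc. (phR R u)$3 = zl})
                  (\<lambda>p. dn_z (phR R) (THE u. u \<in> Disc \<and> phR R u = p))"

lemma A_R_FR: "A_R (phR R) = Lim (at_right 0) (FR R)"
  unfolding A_R_def FR_def ..

lemma surf_scale: assumes R: "R > 0"
  shows "surf_int (phR R) {u\<in>Disc. (phR R u)$3 \<ge> zl} (\<lambda>u. 1 / ((phR R u)$3)\<^sup>2)
       = surf_int (phR 1) {u\<in>Disc. (phR 1 u)$3 \<ge> zl / R} (\<lambda>u. 1 / ((phR 1 u)$3)\<^sup>2)"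
proof -
  have set: "{u\<in>Disc. (phR R u)$3 \<ge> zl} = {u\<in>Disc. (phR 1 u)$3 \<ge> zl / R}"
    using R by (auto simp: phR_nth3 field_simps simp del: chi_nth)
  show ?thesis unfolding surf_int_def set
  proof (rule integral_cong)
    fix u assume "u \<in> {u \<in> Disc. zl / R \<le> phR 1 u $ 3}"
    show "1 / (phR R u $ 3)\<^sup>2 * norm (Nrm (phR R) u) = 1 / (phR 1 u $ 3)\<^sup>2 * norm (Nrm (phR 1) u)"
    proof (cases "chi u $ 3 = 0")
      case True then show ?thesis by (simp add: phR_nth3 del: chi_nth)
    next
      case False then show ?thesis using R
        by (simp add: phR_nth3 norm_Nrm_phR power2_eq_square field_simps del: chi_nth)
    qed
  qed
qed

lemma FR_scale: assumes R: "R > 0" and z: "0 < zl" "zl < R"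
  shows "FR R zl = FR 1 (zl / R)"
proof -
  have z1: "0 < zl / R" "zl / R < 1" using z R by (simp_all add: field_simps)
  define S where "S = surf_int (phR 1) {u\<in>Disc. (phR 1 u)$3 \<ge> zl / R} (\<lambda>u. 1 / ((phR 1 u)$3)\<^sup>2)"
  define D where "D = DZ (zl / R)"
  define q where "q = sqrt (1^2 - (zl/R)^2)"
  have e1: "FR R zl = S + (1 / zl) * (2 * pi * sqrt (R^2 - zl^2) * D)"
    unfolding FR_def surf_scale[OF R] line_level_phR[OF R z] S_def D_def ..
  have e2: "FR 1 (zl / R) = S + (1 / (zl / R)) * (2 * pi * q * DZ (zl / R / 1))"
    unfolding FR_def line_level_phR[OF zero_less_one z1] S_def q_def ..
  have sq: "sqrt (R^2 - zl^2) = R * q"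
  proof -
    have "R^2 - zl^2 = R^2 * (1^2 - (zl/R)^2)" using R by (simp add: field_simps)
    then show ?thesis using R by (simp add: real_sqrt_mult q_def)
  qed
  have "(1 / zl) * (2 * pi * (R * q) * D) = (1 / (zl / R)) * (2 * pi * q * D)"
    using R z by (simp add: field_simps)
  then show ?thesis unfolding e1 e2 sq by (simp add: D_def)
qed

lemma A_R_phR: assumes R: "R > 0" shows "A_R (phR R) = A_R (phR 1)"
proof -
  have "A_R (phR R) = Lim (at_right 0) (\<lambda>z. FR 1 (z / R))"
    unfolding A_R_FR
  proof (rule Lim_cong)
    show "\<forall>\<^sub>F x in at_right 0. FR R x = FR 1 (x / R)"
      using eventually_at_right_real[OF R] by eventually_elim (auto intro: FR_scale[OF R])
  qed simp
  also have "\<dots> = Lim (at_right 0) (FR 1)"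
  proof -
    have fm: "filtermap (\<lambda>z. z / R) (at_right (0::real)) = at_right 0"
    proof -
      have "(\<lambda>z::real. z / R) = times (inverse R)" by (auto simp: divide_inverse mult.commute)
      then show ?thesis using filtermap_times_pos_at_right[of "inverse R" 0] R by simp
    qed
    have "((\<lambda>z. FR 1 (z / R)) \<longlongrightarrow> l) (at_right 0) \<longleftrightarrow> (FR 1 \<longlongrightarrow> l) (at_right 0)" for l
      using filterlim_filtermap[of "FR 1" "nhds l" "\<lambda>z. z / R" "at_right 0"] fm by simp
    then show ?thesis unfolding t2_space_class.Lim_def by simp
  qed
  finally show ?thesis unfolding A_R_FR .
qed




theorem mainTheorem7:
  fixes c\<^sub>o :: real
  assumes "c\<^sub>o > 0"
  shows "\<not> (\<exists>\<phi>\<^sub>0. admissible_disc \<phi>\<^sub>0 \<and>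
            (\<forall>\<phi>. admissible_disc \<phi> \<longrightarrow> - G_R c\<^sub>o \<phi>\<^sub>0 \<le> - G_R c\<^sub>o \<phi>))"
proof
  assume "\<exists>\<phi>\<^sub>0. admissible_disc \<phi>\<^sub>0 \<and> (\<forall>\<phi>. admissible_disc \<phi> \<longrightarrow> - G_R c\<^sub>o \<phi>\<^sub>0 \<le> - G_R c\<^sub>o \<phi>)"
  then obtain \<phi>0 where min: "\<And>\<phi>. admissible_disc \<phi> \<Longrightarrow> - G_R c\<^sub>o \<phi>0 \<le> - G_R c\<^sub>o \<phi>" by blast
  define J where "J = integral (ball 0 1) fJ"
  define A1 where "A1 = A_R (phR 1)"
  have J: "J > 0" unfolding J_def by (rule J_pos)
  have G: "G_R c\<^sub>o (phR R) = A1 + 2 * c\<^sub>o * R * J" if R: "R > 0" for R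
    unfolding G_R_def A1_def J_def using A_R_phR[OF R] U_R_phR[OF R] by simp
  define R where "R = (\<bar>G_R c\<^sub>o \<phi>0\<bar> + \<bar>A1\<bar> + 1) / (2 * c\<^sub>o * J)"
  have cJ: "2 * c\<^sub>o * J > 0" using assms J by simp
  have R0: "R > 0" unfolding R_def using cJ by (intro divide_pos_pos) auto
  have "2 * c\<^sub>o * R * J = (2 * c\<^sub>o * J) * R" by (simp add: mult_ac)
  also have "\<dots> = \<bar>G_R c\<^sub>o \<phi>0\<bar> + \<bar>A1\<bar> + 1"
    unfolding R_def using J assms by simp
  finally have "2 * c\<^sub>o * R * J = \<bar>G_R c\<^sub>o \<phi>0\<bar> + \<bar>A1\<bar> + 1" .
  moreover have "- G_R c\<^sub>o \<phi>0 \<le> - G_R c\<^sub>o (phR R)" by (rule min[OF admissible_phR[OF R0]])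
  ultimately show False using G[OF R0] abs_ge_self[of A1] abs_ge_minus_self[of "G_R c\<^sub>o \<phi>0"]
    by linarith
qed


end
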